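(* Let $R$ be a t-unital ring. Then the functor $\mathrm{Hom}_R(R,{-})$, from the category of all (nonunital) left $R$-modules to the full subcategory of c-unital left $R$-modules, is left adjoint to the fully faithful inclusion of c-unital left $R$-modules into all left $R$-modules. For any left $R$-module $P$, the natural map $P\to\mathrm{Hom}_R(R,P)$, $p\mapsto(r\mapsto rp)$, is the adjunction unit.
   Context: Rings are associative, not necessarily unital; modules are not assumed unital. $R$ is t-unital if $R\otimes_R R\to R$ is an isomorphism. $\mathrm{Hom}_R$ denotes left $R$-module homomorphisms, and $\mathrm{Hom}_R(R,P)$ is a left $R$-module via the right action of $R$ on itself. A left $R$-module $P$ is c-unital if the natural map $P\to\mathrm{Hom}_R(R,P)$ is an isomorphism. *)

theory Defs
  imports Main "HOL-Library.Poly_Mapping" "HOL-Library.Function_Algebras"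
begin

text \<open>Nonunital rings: the type class ring (associative, no unit required).
  Left modules over R: a subgroup M of an ambient abelian group type,
  with an action act satisfying the (nonunital) module axioms on M.\<close>

definition lmodule :: "'m::ab_group_add set \<Rightarrow> ('r::ring \<Rightarrow> 'm \<Rightarrow> 'm) \<Rightarrow> bool" where
  "lmodule M act \<longleftrightarrow>
     0 \<in> M \<and> (\<forall>x\<in>M. \<forall>y\<in>M. x + y \<in> M) \<and> (\<forall>x\<in>M. - x \<in> M) \<and>
     (\<forall>r. \<forall>x\<in>M. act r x \<in> M) \<and>
     (\<forall>r. \<forall>x\<in>M. \<forall>y\<in>M. act r (x + y) = act r x + act r y) \<and>
     (\<forall>r s. \<forall>x\<in>M. act (r + s) x = act r x + act s x) \<and>
     (\<forall>r s. \<forall>x\<in>M. act (r * s) x = act r (act s x))"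

definition module_hom ::
  "'m::ab_group_add set \<Rightarrow> ('r::ring \<Rightarrow> 'm \<Rightarrow> 'm) \<Rightarrow>
   'n::ab_group_add set \<Rightarrow> ('r \<Rightarrow> 'n \<Rightarrow> 'n) \<Rightarrow> ('m \<Rightarrow> 'n) \<Rightarrow> bool" where
  "module_hom M actM N actN f \<longleftrightarrow>
     (\<forall>x\<in>M. f x \<in> N) \<and> (\<forall>x\<in>M. \<forall>y\<in>M. f (x + y) = f x + f y) \<and>
     (\<forall>r. \<forall>x\<in>M. f (actM r x) = actN r (f x))"

definition HomR :: "'m::ab_group_add set \<Rightarrow> ('r::ring \<Rightarrow> 'm \<Rightarrow> 'm) \<Rightarrow> ('r \<Rightarrow> 'm) set" where
  "HomR P act = {\<phi>. module_hom (UNIV :: 'r set) (\<lambda>a r. a * r) P act \<phi>}"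

text \<open>Left R-action on Hom_R(R,P) induced by the right action of R on itself.\<close>
definition homact :: "'r::ring \<Rightarrow> ('r \<Rightarrow> 'm) \<Rightarrow> ('r \<Rightarrow> 'm)" where
  "homact a \<phi> = (\<lambda>r. \<phi> (r * a))"

definition eta :: "('r::ring \<Rightarrow> 'm \<Rightarrow> 'm) \<Rightarrow> 'm \<Rightarrow> ('r \<Rightarrow> 'm)" where
  "eta act p = (\<lambda>r. act r p)"

definition c_unital :: "'m::ab_group_add set \<Rightarrow> ('r::ring \<Rightarrow> 'm \<Rightarrow> 'm) \<Rightarrow> bool" where
  "c_unital P act \<longleftrightarrow> lmodule P act \<and> bij_betw (eta act) P (HomR P act)"

text \<open>Tensor product R \<otimes>_R R presented as the free abelian group Z[R x R]
  modulo the subgroup generated by bilinearity and balancing relations.\<close>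
inductive_set tens_rel :: "('r::ring \<times> 'r \<Rightarrow>\<^sub>0 int) set" where
  zero: "0 \<in> tens_rel"
| addl: "Poly_Mapping.single (r + r', s) 1 - Poly_Mapping.single (r, s) 1
           - Poly_Mapping.single (r', s) 1 \<in> tens_rel"
| addr: "Poly_Mapping.single (r, s + s') 1 - Poly_Mapping.single (r, s) 1
           - Poly_Mapping.single (r, s') 1 \<in> tens_rel"
| bal: "Poly_Mapping.single (r * a, s) 1 - Poly_Mapping.single (r, a * s) 1 \<in> tens_rel"
| add: "x \<in> tens_rel \<Longrightarrow> y \<in> tens_rel \<Longrightarrow> x + y \<in> tens_rel"
| neg: "x \<in> tens_rel \<Longrightarrow> - x \<in> tens_rel"

definition zmult :: "int \<Rightarrow> 'a::ab_group_add \<Rightarrow> 'a" where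
  "zmult k a = (if 0 \<le> k then (\<Sum>_<nat k. a) else - (\<Sum>_<nat (- k). a))"

definition tens_mult :: "('r::ring \<times> 'r \<Rightarrow>\<^sub>0 int) \<Rightarrow> 'r" where
  "tens_mult x = (\<Sum>p\<in>Poly_Mapping.keys x. zmult (Poly_Mapping.lookup x p) (fst p * snd p))"

text \<open>t-unital: the induced map R \<otimes>_R R \<rightarrow> R (on the quotient by tens_rel)
  is well defined and bijective.\<close>
definition t_unital :: "'r::ring itself \<Rightarrow> bool" where
  "t_unital _ \<longleftrightarrow>
     (\<forall>y::'r. \<exists>x. tens_mult x = y) \<and>
     (\<forall>x y :: ('r \<times> 'r \<Rightarrow>\<^sub>0 int). tens_mult x = tens_mult y \<longleftrightarrow> x - y \<in> tens_rel)"

end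

theory Submission
  imports Defs
begin

lemma zmult_0[simp]: "zmult 0 a = 0" by (simp add: zmult_def)
lemma zmult_1[simp]: "zmult 1 a = a" by (simp add: zmult_def)

lemma zmult_succ: "zmult (k+1) a = zmult k a + (a::'a::ab_group_add)"
proof (cases "0 \<le> k")
  case True
  then have "nat (k+1) = Suc (nat k)" by simp
  then show ?thesis using True by (simp add: zmult_def add.commute)
next
  case False
  show ?thesis
  proof (cases "k = -1")
    case True then show ?thesis by (simp add: zmult_def)
  next
    case F2: False
    with False have "nat (-k) = Suc (nat (-(k+1)))" by simp
    then show ?thesis using False F2 by (simp add: zmult_def)
  qed
qed

lemma zmult_add: "zmult (k+l) a = zmult k a + zmult l (a::'a::ab_group_add)"
proof (induction l rule: int_induct[where k=0])
  case base then show ?case by simp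
next
  case (step1 i)
  have "zmult (k + (i+1)) a = zmult ((k+i)+1) a" by (simp add: ac_simps)
  also have "\<dots> = zmult k a + zmult i a + a" using step1 zmult_succ[of "k+i" a] by simp
  also have "\<dots> = zmult k a + zmult (i+1) a" by (simp only: zmult_succ[of i a] add.assoc)
  finally show ?case .
next
  case (step2 i)
  have a: "zmult (k+i-1) a = zmult (k+i) a - a" using zmult_succ[of "k+i-1" a] by simp
  have b: "zmult (i-1) a = zmult i a - a" using zmult_succ[of "i-1" a] by simp
  have "zmult (k + (i-1)) a = zmult (k+i-1) a" by (simp add: algebra_simps)
  also have "\<dots> = zmult k a + zmult i a - a" using a step2 by simp
  also have "\<dots> = zmult k a + zmult (i-1) a" using b by simp
  finally show ?case .
qed

definition subgrp :: "'a::ab_group_add set \<Rightarrow> bool" where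
  "subgrp S \<longleftrightarrow> 0 \<in> S \<and> (\<forall>x\<in>S. \<forall>y\<in>S. x + y \<in> S) \<and> (\<forall>x\<in>S. - x \<in> S)"

definition addhom :: "'a::ab_group_add set \<Rightarrow> ('a \<Rightarrow> 'b::ab_group_add) \<Rightarrow> bool" where
  "addhom S h \<longleftrightarrow> (\<forall>x\<in>S. \<forall>y\<in>S. h (x + y) = h x + h y)"

lemma subgrp_UNIV[simp]: "subgrp UNIV" by (simp add: subgrp_def)

lemma sumc_in: "subgrp S \<Longrightarrow> a \<in> S \<Longrightarrow> (\<Sum>_<(n::nat). a) \<in> S"
  by (induction n) (auto simp: subgrp_def)

lemma zmult_in: "subgrp S \<Longrightarrow> a \<in> S \<Longrightarrow> zmult k a \<in> S"
  using sumc_in by (auto simp: zmult_def subgrp_def)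

lemma addhom_0: "subgrp S \<Longrightarrow> addhom S h \<Longrightarrow> h 0 = 0"
  unfolding addhom_def subgrp_def by (metis add_cancel_right_right)

lemma addhom_neg: "subgrp S \<Longrightarrow> addhom S h \<Longrightarrow> x \<in> S \<Longrightarrow> h (- x) = - h x"
proof -
  assume s: "subgrp S" and h: "addhom S h" and x: "x \<in> S"
  have "h (x + - x) = h x + h (- x)" using s h x unfolding subgrp_def addhom_def by blast
  then have "h x + h (- x) = 0" using addhom_0[OF s h] by simp
  then show ?thesis by (simp add: eq_neg_iff_add_eq_0 add.commute)
qed

lemma addhom_sumc: "subgrp S \<Longrightarrow> addhom S h \<Longrightarrow> a \<in> S \<Longrightarrow> h (\<Sum>_<(n::nat). a) = (\<Sum>_<n. h a)"
proof (induction n)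
  case 0 then show ?case using addhom_0 by simp
next
  case (Suc n)
  then show ?case using sumc_in[of S a n] by (simp add: addhom_def)
qed

lemma addhom_zmult: "subgrp S \<Longrightarrow> addhom S h \<Longrightarrow> a \<in> S \<Longrightarrow> h (zmult k a) = zmult k (h a)"
  using addhom_sumc[of S h a] addhom_neg[of S h "\<Sum>_<nat (-k). a"] sumc_in[of S a "nat (-k)"]
  by (simp add: zmult_def)

lemma addhom_sum: "subgrp S \<Longrightarrow> addhom S h \<Longrightarrow> (\<forall>i\<in>A. f i \<in> S) \<Longrightarrow> h (sum f A) = (\<Sum>i\<in>A. h (f i)) \<and> sum f A \<in> S"
proof (induction A rule: infinite_finite_induct)
  case (infinite A) then show ?case using addhom_0 by (simp add: subgrp_def)
next
  case empty then show ?case using addhom_0 by (simp add: subgrp_def)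
next
  case (insert x F) then show ?case by (simp add: addhom_def subgrp_def)
qed

definition lin :: "('i \<Rightarrow> 'a::ab_group_add) \<Rightarrow> ('i \<Rightarrow>\<^sub>0 int) \<Rightarrow> 'a" where
  "lin g x = (\<Sum>p\<in>Poly_Mapping.keys x. zmult (Poly_Mapping.lookup x p) (g p))"

lemma tens_mult_lin: "tens_mult = lin (\<lambda>p. fst p * snd p)"
  by (simp add: fun_eq_iff tens_mult_def lin_def)

lemma lin_superset: "finite A \<Longrightarrow> Poly_Mapping.keys x \<subseteq> A \<Longrightarrow>
   lin g x = (\<Sum>p\<in>A. zmult (Poly_Mapping.lookup x p) (g p))"
  unfolding lin_def
  by (rule sum.mono_neutral_left) (auto simp: in_keys_iff)

lemma lin_add: "lin g (x + y) = lin g x + lin g y"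
proof -
  let ?A = "Poly_Mapping.keys x \<union> Poly_Mapping.keys y"
  have "lin g (x + y) = (\<Sum>p\<in>?A. zmult (Poly_Mapping.lookup (x+y) p) (g p))"
    by (rule lin_superset) (use keys_add[of x y] in auto)
  also have "\<dots> = (\<Sum>p\<in>?A. zmult (Poly_Mapping.lookup x p) (g p)) + (\<Sum>p\<in>?A. zmult (Poly_Mapping.lookup y p) (g p))"
    by (simp add: lookup_add zmult_add sum.distrib)
  also have "\<dots> = lin g x + lin g y"
    by (subst (1 2) lin_superset[where A="?A"]) auto
  finally show ?thesis .
qed

lemma lin_0[simp]: "lin g 0 = 0" by (simp add: lin_def)

lemma lin_neg: "lin g (- x) = - lin g x"
  using lin_add[of g x "-x"] by (simp add: eq_neg_iff_add_eq_0 add.commute)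

lemma lin_diff: "lin g (x - y) = lin g x - lin g y"
  using lin_add[of g x "-y"] lin_neg[of g y] by simp

lemma lin_single: "lin g (Poly_Mapping.single p k) = zmult k (g p)"
  by (simp add: lin_def)

lemma lin_in: "subgrp S \<Longrightarrow> (\<forall>p. g p \<in> S) \<Longrightarrow> lin g x \<in> S"
proof -
  assume s: "subgrp S" and g: "\<forall>p. g p \<in> S"
  have "addhom S id" by (simp add: addhom_def)
  from addhom_sum[OF s this, where f="\<lambda>p. zmult (Poly_Mapping.lookup x p) (g p)" and A="Poly_Mapping.keys x"]
  show ?thesis using zmult_in[OF s] g unfolding lin_def by auto
qed

lemma lin_hom: "subgrp S \<Longrightarrow> addhom S h \<Longrightarrow> (\<forall>p. g p \<in> S) \<Longrightarrow> h (lin g x) = lin (\<lambda>p. h (g p)) x"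
proof -
  assume s: "subgrp S" and h: "addhom S h" and g: "\<forall>p. g p \<in> S"
  from addhom_sum[OF s h, where f="\<lambda>p. zmult (Poly_Mapping.lookup x p) (g p)" and A="Poly_Mapping.keys x"]
  show ?thesis using zmult_in[OF s] g addhom_zmult[OF s h] unfolding lin_def by auto
qed


lemma lmod_facts:
  assumes "lmodule P act"
  shows "subgrp P" "addhom P (act r)" "act r 0 = 0" "x \<in> P \<Longrightarrow> act r (- x) = - act r x"
    "x \<in> P \<Longrightarrow> act r x \<in> P" "x \<in> P \<Longrightarrow> y \<in> P \<Longrightarrow> x + y \<in> P" "x \<in> P \<Longrightarrow> - x \<in> P" "0 \<in> P"
    "x \<in> P \<Longrightarrow> y \<in> P \<Longrightarrow> act r (x + y) = act r x + act r y"
    "x \<in> P \<Longrightarrow> act (a + b) x = act a x + act b x"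
    "x \<in> P \<Longrightarrow> act (a * b) x = act a (act b x)"
proof -
  show s: "subgrp P" using assms by (simp add: lmodule_def subgrp_def)
  show h: "addhom P (act r)" using assms by (simp add: lmodule_def addhom_def)
  show "act r 0 = 0" using addhom_0[OF s h] .
  show "x \<in> P \<Longrightarrow> act r (- x) = - act r x" using addhom_neg[OF s h] .
qed (use assms in \<open>auto simp: lmodule_def\<close>)

lemma HomR_iff:
  "\<phi> \<in> HomR P act \<longleftrightarrow> (\<forall>r. \<phi> r \<in> P) \<and> (\<forall>a b. \<phi> (a + b) = \<phi> a + \<phi> b) \<and> (\<forall>a r. \<phi> (a * r) = act a (\<phi> r))"
  by (simp add: HomR_def module_hom_def)

lemma HomR_lmodule:
  fixes act :: "'r::ring \<Rightarrow> 'm::ab_group_add \<Rightarrow> 'm"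
  assumes P: "lmodule P act"
  shows "lmodule (HomR P act) homact"
  unfolding lmodule_def
proof (intro conjI ballI allI)
  note f = lmod_facts[OF P]
  show "0 \<in> HomR P act" using f by (simp add: HomR_iff)
  fix r s :: 'r and x y
  assume x: "x \<in> HomR P act"
  then show "- x \<in> HomR P act" using f by (simp add: HomR_iff)
  show "homact r x \<in> HomR P act" using x f by (simp add: HomR_iff homact_def algebra_simps)
  show "homact (r + s) x = homact r x + homact s x" using x by (simp add: HomR_iff homact_def algebra_simps fun_eq_iff)
  show "homact (r * s) x = homact r (homact s x)" by (simp add: homact_def mult.assoc)
  assume y: "y \<in> HomR P act"
  show "x + y \<in> HomR P act" using x y f by (simp add: HomR_iff algebra_simps)
  show "homact r (x + y) = homact r x + homact r y" by (simp add: homact_def fun_eq_iff)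
qed

lemma eta_hom:
  assumes P: "lmodule P act"
  shows "module_hom P act (HomR P act) homact (eta act)"
  using lmod_facts[OF P] unfolding module_hom_def
  by (auto simp: HomR_iff eta_def homact_def fun_eq_iff)

lemma comp_hom:
  assumes P: "lmodule P act" and P': "lmodule P' act'" and f: "module_hom P act P' act' f"
  shows "module_hom (HomR P act) homact (HomR P' act') homact (\<lambda>\<phi>. f \<circ> \<phi>)
     \<and> (\<forall>p\<in>P. f \<circ> eta act p = eta act' (f p))"
  using f lmod_facts[OF P] unfolding module_hom_def
  by (auto simp: HomR_iff eta_def homact_def fun_eq_iff)

lemma c_unital_HomR:
  assumes T: "t_unital TYPE('r::ring)" and P: "lmodule P act"
  shows "bij_betw (eta homact) (HomR P (act :: 'r \<Rightarrow> 'm::ab_group_add \<Rightarrow> 'm)) (HomR (HomR P act) homact)"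
proof -
  note f = lmod_facts[OF P]
  have surjT: "\<And>y::'r. \<exists>x. tens_mult x = y" and relT: "\<And>x y::('r\<times>'r \<Rightarrow>\<^sub>0 int). tens_mult x = tens_mult y \<longleftrightarrow> x - y \<in> tens_rel"
    using T by (auto simp: t_unital_def)
  have into: "eta homact \<phi> \<in> HomR (HomR P act) homact" if "\<phi> \<in> HomR P act" for \<phi>
    using eta_hom[OF HomR_lmodule[OF P]] that by (simp add: module_hom_def)
  have inj: "inj_on (eta homact) (HomR P act)"
  proof (rule inj_onI)
    fix \<phi> \<psi> assume \<phi>: "\<phi> \<in> HomR P act" and \<psi>: "\<psi> \<in> HomR P act" and e: "eta homact \<phi> = eta homact \<psi>"
    have eq: "\<phi> (r * a) = \<psi> (r * a)" for r a
      using fun_cong[OF fun_cong[OF e, of a], of r] by (simp add: eta_def homact_def)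
    show "\<phi> = \<psi>"
    proof
      fix y :: 'r
      obtain x where x: "tens_mult x = y" using surjT by blast
      have a\<phi>: "addhom UNIV \<phi>" and a\<psi>: "addhom UNIV \<psi>" using \<phi> \<psi> by (auto simp: HomR_iff addhom_def)
      have "\<phi> y = \<phi> (tens_mult x)" using x by simp
      also have "\<dots> = lin (\<lambda>p. \<phi> (fst p * snd p)) x"
        using lin_hom[OF subgrp_UNIV a\<phi>] by (simp add: tens_mult_lin)
      also have "\<dots> = lin (\<lambda>p. \<psi> (fst p * snd p)) x" using eq by simp
      also have "\<dots> = \<psi> (tens_mult x)"
        by (simp add: tens_mult_lin lin_hom[OF subgrp_UNIV a\<psi>])
      also have "\<dots> = \<psi> y" using x by simp
      finally show "\<phi> y = \<psi> y" .
    qed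
  qed
  have onto: "\<Psi> \<in> eta homact ` HomR P act" if \<Psi>: "\<Psi> \<in> HomR (HomR P act) homact" for \<Psi>
  proof -
    have \<Psi>1: "\<Psi> a \<in> HomR P act" for a using \<Psi> by (simp add: HomR_iff)
    have \<Psi>2: "\<Psi> (a + b) = \<Psi> a + \<Psi> b" for a b using \<Psi> by (simp add: HomR_iff)
    have \<Psi>3: "\<Psi> (b * a) r = \<Psi> a (r * b)" for a b r using \<Psi> by (simp add: HomR_iff homact_def)
    have \<Psi>P: "\<Psi> a r \<in> P" for a r using \<Psi>1 by (simp add: HomR_iff)
    have \<Psi>add: "\<Psi> a (r + s) = \<Psi> a r + \<Psi> a s" for a r s using \<Psi>1 by (simp add: HomR_iff)
    have \<Psi>act: "\<Psi> a (b * r) = act b (\<Psi> a r)" for a b r using \<Psi>1 by (simp add: HomR_iff)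
    define G where "G = (\<lambda>p::'r\<times>'r. \<Psi> (snd p) (fst p))"
    define F where "F = lin G"
    have Frel: "F z = 0" if "z \<in> tens_rel" for z
      using that
    proof induction
      case zero then show ?case by (simp add: F_def)
    next
      case (addl r r' s) then show ?case by (simp add: F_def lin_diff lin_single G_def \<Psi>add)
    next
      case (addr r s s') then show ?case by (simp add: F_def lin_diff lin_single G_def \<Psi>2)
    next
      case (bal r a s) then show ?case by (simp add: F_def lin_diff lin_single G_def \<Psi>3)
    next
      case (add x y) then show ?case by (simp add: F_def lin_add)
    next
      case (neg x) then show ?case by (simp add: F_def lin_neg)
    qed
    define \<phi> where "\<phi> = (\<lambda>y. F (SOME x. tens_mult x = y))"
    have key: "\<phi> (tens_mult x) = F x" for x
    proof -
      let ?x = "SOME x'. tens_mult x' = tens_mult x"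
      have "tens_mult ?x = tens_mult x" by (rule someI) rule
      then have "?x - x \<in> tens_rel" using relT by blast
      then have "F (?x - x) = 0" by (rule Frel)
      then show ?thesis by (simp add: \<phi>_def F_def lin_diff)
    qed
    have tm_add: "tens_mult (x + y) = tens_mult x + tens_mult y" for x y
      by (simp add: tens_mult_lin lin_add)
    have tm_single: "tens_mult (Poly_Mapping.single (r, s) 1) = r * s" for r s
      by (simp add: tens_mult_lin lin_single)
    have \<phi>H: "\<phi> \<in> HomR P act"
      unfolding HomR_iff
    proof (intro conjI allI)
      fix r :: 'r
      obtain x where x: "tens_mult x = r" using surjT by blast
      show "\<phi> r \<in> P" using key[of x] x lin_in[OF f(1), of G x] \<Psi>P by (simp add: F_def G_def)
    next
      fix a b :: 'r
      obtain x where x: "tens_mult x = a" using surjT by blast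
      obtain y where y: "tens_mult y = b" using surjT by blast
      show "\<phi> (a + b) = \<phi> a + \<phi> b"
        using key[of "x+y"] key[of x] key[of y] x y tm_add[of x y] by (simp add: F_def lin_add)
    next
      fix b y :: 'r
      obtain x where x: "tens_mult x = y" using surjT by blast
      have "\<phi> (b * y) = \<phi> (tens_mult (Poly_Mapping.single (b, y) 1))" by (simp only: tm_single)
      also have "\<dots> = \<Psi> y b" using key[of "Poly_Mapping.single (b, y) 1"]
        by (simp add: F_def lin_single G_def)
      also have "\<dots> = lin (\<lambda>p. \<Psi> (fst p * snd p) b) x"
      proof -
        have "addhom UNIV (\<lambda>z. \<Psi> z b)" using \<Psi>2 by (simp add: addhom_def)
        from lin_hom[OF subgrp_UNIV this] show ?thesis unfolding x[symmetric] tens_mult_lin by simp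
      qed
      also have "\<dots> = lin (\<lambda>p. act b (G p)) x" using \<Psi>3 \<Psi>act by (simp add: G_def)
      also have "\<dots> = act b (F x)"
        using lin_hom[OF f(1) f(2)[of b], where g=G and x=x] \<Psi>P by (simp add: F_def G_def)
      also have "\<dots> = act b (\<phi> y)" using key[of x] x by simp
      finally show "\<phi> (b * y) = act b (\<phi> y)" .
    qed
    have "eta homact \<phi> = \<Psi>"
    proof (intro ext)
      fix a r :: 'r
      show "eta homact \<phi> a r = \<Psi> a r"
        using key[of "Poly_Mapping.single (r, a) 1"]
        by (simp add: tm_single[symmetric] eta_def homact_def F_def lin_single G_def)
    qed
    then show ?thesis using \<phi>H by blast
  qed
  show ?thesis unfolding bij_betw_def using inj into onto by blast
qed


lemma univ_prop:
  fixes act :: "'r::ring \<Rightarrow> 'm::ab_group_add \<Rightarrow> 'm" and actQ :: "'r \<Rightarrow> 'q::ab_group_add \<Rightarrow> 'q"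
  assumes P: "lmodule P act" and Qc: "c_unital Q actQ" and f: "module_hom P act Q actQ f"
  shows "\<exists>g. module_hom (HomR P act) homact Q actQ g
                  \<and> (\<forall>p\<in>P. g (eta act p) = f p)
                  \<and> (\<forall>g'. module_hom (HomR P act) homact Q actQ g'
                         \<and> (\<forall>p\<in>P. g' (eta act p) = f p)
                         \<longrightarrow> (\<forall>\<phi>\<in>HomR P act. g' \<phi> = g \<phi>))"
proof -
  have Q: "lmodule Q actQ" and bij: "bij_betw (eta actQ) Q (HomR Q actQ)" using Qc by (auto simp: c_unital_def)
  have inj: "inj_on (eta actQ) Q" using bij by (simp add: bij_betw_def)
  note cf = comp_hom[OF P Q f]
  note eQ = eta_hom[OF Q]
  note fP = lmod_facts[OF P]
  define g where "g \<phi> = the_inv_into Q (eta actQ) (f \<circ> \<phi>)" for \<phi>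
  have fin: "f \<circ> \<phi> \<in> HomR Q actQ" if "\<phi> \<in> HomR P act" for \<phi>
    using cf that by (simp add: module_hom_def)
  have gQ: "g \<phi> \<in> Q" if "\<phi> \<in> HomR P act" for \<phi>
    using the_inv_into_into[OF inj, of "f \<circ> \<phi>"] fin[OF that] bij by (simp add: g_def bij_betw_def)
  have eg: "eta actQ (g \<phi>) = f \<circ> \<phi>" if "\<phi> \<in> HomR P act" for \<phi>
    using f_the_inv_into_f_bij_betw[OF bij fin[OF that]] by (simp add: g_def)
  have uniq: "g \<phi> = y" if "\<phi> \<in> HomR P act" "y \<in> Q" "eta actQ y = f \<circ> \<phi>" for \<phi> y
    using inj_onD[OF inj, of "g \<phi>" y] eg[OF that(1)] gQ[OF that(1)] that by simp
  have HL: "lmodule (HomR P act) homact" by (rule HomR_lmodule[OF P])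
  note fH = lmod_facts[OF HL]
  have ghom: "module_hom (HomR P act) homact Q actQ g"
    unfolding module_hom_def
  proof (intro conjI ballI allI)
    fix \<phi> assume \<phi>: "\<phi> \<in> HomR P act"
    show "g \<phi> \<in> Q" using gQ[OF \<phi>] .
    fix r :: 'r
    show "g (homact r \<phi>) = actQ r (g \<phi>)"
    proof (rule uniq)
      show "homact r \<phi> \<in> HomR P act" using fH(5)[OF \<phi>] .
      show "actQ r (g \<phi>) \<in> Q" using lmod_facts(5)[OF Q gQ[OF \<phi>]] .
      have "eta actQ (actQ r (g \<phi>)) = homact r (eta actQ (g \<phi>))" using eQ gQ[OF \<phi>] by (simp add: module_hom_def)
      also have "\<dots> = f \<circ> homact r \<phi>" using eg[OF \<phi>] by (simp add: homact_def fun_eq_iff)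
      finally show "eta actQ (actQ r (g \<phi>)) = f \<circ> homact r \<phi>" .
    qed
  next
    fix \<phi> \<psi> assume \<phi>: "\<phi> \<in> HomR P act" and \<psi>: "\<psi> \<in> HomR P act"
    show "g (\<phi> + \<psi>) = g \<phi> + g \<psi>"
    proof (rule uniq)
      show "\<phi> + \<psi> \<in> HomR P act" using fH(6)[OF \<phi> \<psi>] .
      show "g \<phi> + g \<psi> \<in> Q" using lmod_facts(6)[OF Q gQ[OF \<phi>] gQ[OF \<psi>]] .
      have "eta actQ (g \<phi> + g \<psi>) = eta actQ (g \<phi>) + eta actQ (g \<psi>)" using eQ gQ \<phi> \<psi> by (simp add: module_hom_def)
      also have "\<dots> = f \<circ> (\<phi> + \<psi>)" using eg[OF \<phi>] eg[OF \<psi>] f \<phi> \<psi>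
        by (simp add: fun_eq_iff module_hom_def HomR_iff)
      finally show "eta actQ (g \<phi> + g \<psi>) = f \<circ> (\<phi> + \<psi>)" .
    qed
  qed
  have etaP: "eta act p \<in> HomR P act" if "p \<in> P" for p
    using eta_hom[OF P] that by (simp add: module_hom_def)
  have gp: "\<forall>p\<in>P. g (eta act p) = f p"
  proof
    fix p assume p: "p \<in> P"
    show "g (eta act p) = f p"
      using uniq[OF etaP[OF p], of "f p"] cf p f by (simp add: module_hom_def)
  qed
  have un: "\<forall>\<phi>\<in>HomR P act. g' \<phi> = g \<phi>"
    if g': "module_hom (HomR P act) homact Q actQ g'" and g'p: "\<forall>p\<in>P. g' (eta act p) = f p" for g'
  proof
    fix \<phi> assume \<phi>: "\<phi> \<in> HomR P act"
    have he: "homact r \<phi> = eta act (\<phi> r)" for r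
      using \<phi> by (simp add: HomR_iff homact_def eta_def fun_eq_iff)
    have "eta actQ (g' \<phi>) = f \<circ> \<phi>"
    proof
      fix r
      have "eta actQ (g' \<phi>) r = actQ r (g' \<phi>)" by (simp add: eta_def)
      also have "\<dots> = g' (homact r \<phi>)" using g' \<phi> by (simp add: module_hom_def)
      also have "\<dots> = f (\<phi> r)" using he g'p \<phi> by (simp add: HomR_iff)
      finally show "eta actQ (g' \<phi>) r = (f \<circ> \<phi>) r" by simp
    qed
    moreover have "g' \<phi> \<in> Q" using g' \<phi> by (simp add: module_hom_def)
    ultimately show "g' \<phi> = g \<phi>" using uniq[OF \<phi>] by metis
  qed
  show ?thesis using ghom gp un by blast
qed

theorem lemma5p3:
  fixes P :: "'m::ab_group_add set" and actP :: "'r::ring \<Rightarrow> 'm \<Rightarrow> 'm"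
  assumes "t_unital TYPE('r)"
    and "lmodule P actP"
  shows "c_unital (HomR P actP) homact
     \<and> module_hom P actP (HomR P actP) homact (eta actP)
     \<and> (\<forall>(P' :: 'n::ab_group_add set) actP' f.
           lmodule P' actP' \<and> module_hom P actP P' actP' f \<longrightarrow>
             module_hom (HomR P actP) homact (HomR P' actP') homact (\<lambda>\<phi>. f \<circ> \<phi>)
             \<and> (\<forall>p\<in>P. f \<circ> eta actP p = eta actP' (f p)))
     \<and> (\<forall>(Q :: 'q::ab_group_add set) actQ f.
           c_unital Q actQ \<and> module_hom P actP Q actQ f \<longrightarrow>
             (\<exists>g. module_hom (HomR P actP) homact Q actQ g
                  \<and> (\<forall>p\<in>P. g (eta actP p) = f p)
                  \<and> (\<forall>g'. module_hom (HomR P actP) homact Q actQ g'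
                         \<and> (\<forall>p\<in>P. g' (eta actP p) = f p)
                         \<longrightarrow> (\<forall>\<phi>\<in>HomR P actP. g' \<phi> = g \<phi>))))"
proof (intro conjI)
  show "c_unital (HomR P actP) homact"
    using HomR_lmodule[OF assms(2)] c_unital_HomR[OF assms] by (simp add: c_unital_def)
  show "module_hom P actP (HomR P actP) homact (eta actP)" by (rule eta_hom[OF assms(2)])
  show "\<forall>(P' :: 'n::ab_group_add set) actP' f.
           lmodule P' actP' \<and> module_hom P actP P' actP' f \<longrightarrow>
             module_hom (HomR P actP) homact (HomR P' actP') homact (\<lambda>\<phi>. f \<circ> \<phi>)
             \<and> (\<forall>p\<in>P. f \<circ> eta actP p = eta actP' (f p))"
  proof (intro allI impI)
    fix P' :: "'n set" and actP' f
    assume "lmodule P' actP' \<and> module_hom P actP P' actP' f"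
    then show "module_hom (HomR P actP) homact (HomR P' actP') homact (\<lambda>\<phi>. f \<circ> \<phi>)
             \<and> (\<forall>p\<in>P. f \<circ> eta actP p = eta actP' (f p))"
      using comp_hom[OF assms(2)] by blast
  qed
  show "\<forall>(Q :: 'q::ab_group_add set) actQ f.
           c_unital Q actQ \<and> module_hom P actP Q actQ f \<longrightarrow>
             (\<exists>g. module_hom (HomR P actP) homact Q actQ g
                  \<and> (\<forall>p\<in>P. g (eta actP p) = f p)
                  \<and> (\<forall>g'. module_hom (HomR P actP) homact Q actQ g'
                         \<and> (\<forall>p\<in>P. g' (eta actP p) = f p)
                         \<longrightarrow> (\<forall>\<phi>\<in>HomR P actP. g' \<phi> = g \<phi>)))"
  proof (intro allI impI)
    fix Q :: "'q set" and actQ f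
    assume a: "c_unital Q actQ \<and> module_hom P actP Q actQ f"
    show "\<exists>g. module_hom (HomR P actP) homact Q actQ g
                  \<and> (\<forall>p\<in>P. g (eta actP p) = f p)
                  \<and> (\<forall>g'. module_hom (HomR P actP) homact Q actQ g'
                         \<and> (\<forall>p\<in>P. g' (eta actP p) = f p)
                         \<longrightarrow> (\<forall>\<phi>\<in>HomR P actP. g' \<phi> = g \<phi>))"
      using univ_prop[OF assms(2)] a by blast
  qed
qed

end
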